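(* Let $\mathcal A$ be finite, and assume the margin condition with parameter $\nu\in(0,\infty]$ and the policy overlap condition with constant $\beta_0>0$. Let $\pi^\star(a\mid x)=\mathbf 1\{a=a^\star(x)\}$. Then: (i) if $\nu\in(0,\infty)$, for every policy $\pi$ satisfying overlap, \[ \operatorname{Var}_{X\sim P_X,A\sim\pi(\cdot\mid X)}\Big(\frac{\pi^\star(A\mid X)}{\pi(A\mid X)}\Big)\le\frac{K}{\beta_0}\big(R^\star(\pi)-R^\star(\pi^\star)\big)^{\nu/(\nu+1)},\qquad K=\Big(\frac{(\nu+1)^{(\nu+1)/\nu}\,c}{\nu M}\Big)^{\nu/(\nu+1)}; \] (ii) if $\nu=\infty$, the same variance is at most $\frac{1}{\beta_0Mu_0}\big(R^\star(\pi)-R^\star(\pi^\star)\big)$.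
   Context: Contexts $X\sim P_X$ on $\mathcal X$, finite action set $\mathcal A$, outcome (loss) $Y\sim P_Y(\cdot\mid X,A)$ with $\mu(x,a)=\mathbb E[Y\mid X=x,A=a]$. $\mu^\star(x)=\min_{a\in\mathcal A}\mu(x,a)$, attained at $a^\star(x)$, and $\Delta_{\min}(x)=\min_{a\ne a^\star(x)}\mu(x,a)-\mu^\star(x)\ge0$. For a policy $\pi$, $R^\star(\pi)=\mathbb E_{X\sim P_X,A\sim\pi(\cdot\mid X)}[\mu(X,A)]$. Margin condition (parameter $\nu$, constants $M,c>0$): for $\nu\in(0,\infty)$, $\Pr(\Delta_{\min}(X)\le Mu)\le(cu)^\nu$ for all $u\ge0$; for $\nu=\infty$, there is $u_0>0$ with $\Pr(\Delta_{\min}(X)\le Mu_0)=0$. Policy overlap: $\pi(a^\star(x)\mid x)\ge\beta_0$ for all $x\in\mathcal X$. *)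

theory Defs
  imports "HOL-Probability.Probability"
begin

text \<open>A policy is a conditional pmf given as a function
  pi x a. Expectations under X ~ P, A ~ pi(.|X) are written out explicitly, since the
  action set is finite: E f = integral over x of sum over a of pi x a * f x a.\<close>

definition joint_exp :: "'x measure \<Rightarrow> ('x \<Rightarrow> 'a::finite \<Rightarrow> real) \<Rightarrow> ('x \<Rightarrow> 'a \<Rightarrow> real) \<Rightarrow> real" where
  "joint_exp P pol f = (\<integral>x. (\<Sum>a\<in>UNIV. pol x a * f x a) \<partial>P)"

definition joint_var :: "'x measure \<Rightarrow> ('x \<Rightarrow> 'a::finite \<Rightarrow> real) \<Rightarrow> ('x \<Rightarrow> 'a \<Rightarrow> real) \<Rightarrow> real" where
  "joint_var P pol f = joint_exp P pol (\<lambda>x a. (f x a - joint_exp P pol f)\<^sup>2)"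

definition risk :: "'x measure \<Rightarrow> ('x \<Rightarrow> 'a::finite \<Rightarrow> real) \<Rightarrow> ('x \<Rightarrow> 'a \<Rightarrow> real) \<Rightarrow> real" where
  "risk P mu pol = joint_exp P pol mu"

definition is_policy :: "'x measure \<Rightarrow> ('x \<Rightarrow> 'a::finite \<Rightarrow> real) \<Rightarrow> bool" where
  "is_policy P pol \<longleftrightarrow> (\<forall>a. (\<lambda>x. pol x a) \<in> borel_measurable P) \<and>
     (\<forall>x\<in>space P. (\<forall>a. 0 \<le> pol x a) \<and> (\<Sum>a\<in>UNIV. pol x a) = 1)"

definition pi_star :: "('x \<Rightarrow> 'a) \<Rightarrow> 'x \<Rightarrow> 'a \<Rightarrow> real" where
  "pi_star astar x a = (if a = astar x then 1 else 0)"

text \<open>Minimal gap; infimum over the empty set (single action) is +infinity.\<close>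
definition Delta_min :: "('x \<Rightarrow> 'a \<Rightarrow> real) \<Rightarrow> ('x \<Rightarrow> 'a) \<Rightarrow> 'x \<Rightarrow> ereal" where
  "Delta_min mu astar x = (INF a\<in>{a. a \<noteq> astar x}. ereal (mu x a - mu x (astar x)))"

end

theory Submission
  imports Defs
begin

lemma key:
  fixes P :: "'x measure" and mu :: "'x \<Rightarrow> 'a::finite \<Rightarrow> real"
    and astar :: "'x \<Rightarrow> 'a" and beta0 :: real and pol
  assumes P: "prob_space P"
    and mu_int: "\<And>a. integrable P (\<lambda>x. mu x a)"
    and as: "\<And>a. {x\<in>space P. astar x = a} \<in> sets P"
    and mumin: "\<And>x a. x \<in> space P \<Longrightarrow> mu x (astar x) \<le> mu x a"
    and b0: "beta0 > 0" and pol: "is_policy P pol"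
    and ov: "\<forall>x\<in>space P. pol x (astar x) \<ge> beta0"
  shows "joint_var P pol (\<lambda>x a. pi_star astar x a / pol x a) \<le> (\<integral>x. 1 - pol x (astar x) \<partial>P) / beta0"
    and "\<forall>t>0. (\<integral>x. 1 - pol x (astar x) \<partial>P) \<le> measure P {x\<in>space P. Delta_min mu astar x \<le> ereal t}
            + (risk P mu pol - risk P mu (pi_star astar)) / t"
    and "0 \<le> risk P mu pol - risk P mu (pi_star astar)"
proof -
  interpret prob_space P by fact
  have astar_m: "astar \<in> measurable P (count_space UNIV)"
  proof (subst measurable_count_space_eq2_countable, safe)
    fix a have "astar -` {a} \<inter> space P = {x\<in>space P. astar x = a}" by auto
    then show "astar -` {a} \<inter> space P \<in> sets P" using as by simp
  qed auto
  have comp: "(\<lambda>x. f x (astar x)) \<in> borel_measurable P"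
    if "\<And>b. (\<lambda>x. f x b) \<in> borel_measurable P" for f :: "'x \<Rightarrow> 'a \<Rightarrow> real"
    using measurable_compose_countable'[where f="\<lambda>b x. f x b" and g=astar and I=UNIV, OF that astar_m]
    by simp
  have pol_m: "\<And>a. (\<lambda>x. pol x a) \<in> borel_measurable P"
    and pol_nn: "\<And>x a. x \<in> space P \<Longrightarrow> 0 \<le> pol x a"
    and pol_sum: "\<And>x. x \<in> space P \<Longrightarrow> (\<Sum>a\<in>UNIV. pol x a) = 1"
    using pol unfolding is_policy_def by auto
  have pol_le1: "pol x a \<le> 1" if "x \<in> space P" for x a
  proof -
    have "pol x a \<le> (\<Sum>a\<in>UNIV. pol x a)"
      by (rule member_le_sum) (auto simp: pol_nn that)
    then show ?thesis using pol_sum[OF that] by simp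
  qed
  have p_m: "(\<lambda>x. pol x (astar x)) \<in> borel_measurable P" by (rule comp[OF pol_m])
  have mu_m: "\<And>a. (\<lambda>x. mu x a) \<in> borel_measurable P" using mu_int by blast
  have ps_m: "(\<lambda>x. pi_star astar x a) \<in> borel_measurable P" for a
    unfolding pi_star_def using comp[of "\<lambda>x b. if a = b then 1 else 0"] by simp
  have bmult: "integrable P (\<lambda>x. g x * mu x a)"
    if gm: "g \<in> borel_measurable P" and gb: "\<And>x. x \<in> space P \<Longrightarrow> 0 \<le> g x \<and> g x \<le> 1" for g a
  proof (rule Bochner_Integration.integrable_bound[OF mu_int[of a]])
    show "(\<lambda>x. g x * mu x a) \<in> borel_measurable P" using gm mu_m by measurable
    show "AE x in P. norm (g x * mu x a) \<le> norm (mu x a)"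
    proof (rule AE_I2)
      fix x assume x: "x \<in> space P"
      have "\<bar>g x\<bar> * \<bar>mu x a\<bar> \<le> 1 * \<bar>mu x a\<bar>" using gb[OF x] by (intro mult_right_mono) auto
      then show "norm (g x * mu x a) \<le> norm (mu x a)" by (simp add: abs_mult)
    qed
  qed
  define q where "q x = 1 - pol x (astar x)" for x
  define D where "D x = (\<Sum>a\<in>UNIV. pol x a * (mu x a - mu x (astar x)))" for x
  have q_int: "integrable P q"
  proof (rule integrable_const_bound[where B=1])
    show "q \<in> borel_measurable P" unfolding q_def using p_m by measurable
    show "AE x in P. norm (q x) \<le> 1"
      by (rule AE_I2) (auto simp: q_def pol_nn pol_le1)
  qed
  have int1: "integrable P (\<lambda>x. \<Sum>a\<in>UNIV. pol x a * mu x a)"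
    by (intro Bochner_Integration.integrable_sum bmult pol_m) (auto simp: pol_nn pol_le1)
  have int2: "integrable P (\<lambda>x. \<Sum>a\<in>UNIV. pi_star astar x a * mu x a)"
    by (intro Bochner_Integration.integrable_sum bmult ps_m) (auto simp: pi_star_def)
  have Deq: "D x = (\<Sum>a\<in>UNIV. pol x a * mu x a) - (\<Sum>a\<in>UNIV. pi_star astar x a * mu x a)"
    if x: "x \<in> space P" for x
  proof -
    have "(\<Sum>a\<in>UNIV. pi_star astar x a * mu x a) = mu x (astar x)"
      by (simp add: pi_star_def if_distrib[of "\<lambda>z. z * _"] cong: if_cong)
    moreover have "D x = (\<Sum>a\<in>UNIV. pol x a * mu x a) - (\<Sum>a\<in>UNIV. pol x a) * mu x (astar x)"
      by (simp add: D_def algebra_simps sum_subtractf sum_distrib_right)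
    ultimately show ?thesis using pol_sum[OF x] by simp
  qed
  have Rdef: "risk P mu pol - risk P mu (pi_star astar) = integral\<^sup>L P D"
    unfolding risk_def joint_exp_def
    by (subst Bochner_Integration.integral_diff[OF int1 int2, symmetric]) (auto intro!: Bochner_Integration.integral_cong simp: Deq)
  have D_int: "integrable P D"
  proof -
    have "integrable P (\<lambda>x. (\<Sum>a\<in>UNIV. pol x a * mu x a) - (\<Sum>a\<in>UNIV. pi_star astar x a * mu x a))"
      using int1 int2 by (rule Bochner_Integration.integrable_diff)
    then show ?thesis
      by (subst Bochner_Integration.integrable_cong[OF refl]) (auto simp: Deq)
  qed
  show "0 \<le> risk P mu pol - risk P mu (pi_star astar)"
    unfolding Rdef D_def
    by (rule Bochner_Integration.integral_nonneg) (auto intro!: sum_nonneg simp: pol_nn mumin)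
  have Dset: "{x\<in>space P. Delta_min mu astar x \<le> ereal t} =
     (\<Union>a. {x\<in>space P. astar x \<noteq> a \<and> mu x a - mu x (astar x) \<le> t})" for t
  proof -
    have "Delta_min mu astar x \<le> ereal t \<longleftrightarrow> (\<exists>a. astar x \<noteq> a \<and> mu x a - mu x (astar x) \<le> t)" for x
    proof (cases "{a. a \<noteq> astar x} = {}")
      case True
      then show ?thesis by (auto simp: Delta_min_def top_ereal_def) metis
    next
      case False
      have "Delta_min mu astar x = Min ((\<lambda>a. ereal (mu x a - mu x (astar x))) ` {a. a \<noteq> astar x})"
        unfolding Delta_min_def using False by (intro Min_Inf[symmetric]) auto
      then have "Delta_min mu astar x \<le> ereal t \<longleftrightarrow> (\<exists>a\<in>{a. a \<noteq> astar x}. ereal (mu x a - mu x (astar x)) \<le> ereal t)"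
        using False by (simp add: Min_le_iff)
      then show ?thesis by (metis (mono_tags) ereal_less_eq(3) mem_Collect_eq)
    qed
    then show ?thesis by auto
  qed
  have Dset_m: "{x\<in>space P. Delta_min mu astar x \<le> ereal t} \<in> sets P" for t
  proof -
    have "(\<lambda>x. mu x (astar x)) \<in> borel_measurable P" by (rule comp[OF mu_m])
    moreover have "(\<lambda>x. pi_star astar x a) \<in> borel_measurable P" for a by (rule ps_m)
    ultimately have "{x\<in>space P. astar x \<noteq> a \<and> mu x a - mu x (astar x) \<le> t} \<in> sets P" for a
    proof -
      assume m1: "(\<lambda>x. mu x (astar x)) \<in> borel_measurable P"
      have e: "{x\<in>space P. astar x \<noteq> a \<and> mu x a - mu x (astar x) \<le> t} =
            {x\<in>space P. astar x = a} \<inter> space P - {x\<in>space P. astar x = a} \<union> {}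
          \<inter> {} \<union> ({x\<in>space P. mu x a - mu x (astar x) \<le> t} - {x\<in>space P. astar x = a})"
        by auto
      have "{x\<in>space P. mu x a - mu x (astar x) \<le> t} \<in> sets P"
        using m1 mu_m[of a] by measurable
      then show ?thesis unfolding e using as[of a] by auto
    qed
    then show ?thesis unfolding Dset by auto
  qed
  show "\<forall>t>0. (\<integral>x. 1 - pol x (astar x) \<partial>P) \<le> measure P {x\<in>space P. Delta_min mu astar x \<le> ereal t}
            + (risk P mu pol - risk P mu (pi_star astar)) / t"
  proof (intro allI impI)
    fix t :: real assume t: "t > 0"
    let ?S = "{x\<in>space P. Delta_min mu astar x \<le> ereal t}"
    have "integral\<^sup>L P q \<le> (\<integral>x. indicator ?S x + D x / t \<partial>P)"
    proof (rule Bochner_Integration.integral_mono)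
      show "integrable P (\<lambda>x. indicator ?S x + D x / t)"
        by (intro Bochner_Integration.integrable_add integrable_real_indicator Dset_m
            Bochner_Integration.integrable_divide_zero D_int) (auto simp: less_top[symmetric])
      fix x assume x: "x \<in> space P"
      show "q x \<le> indicator ?S x + D x / t"
      proof (cases "x \<in> ?S")
        case True
        have "0 \<le> D x" unfolding D_def using x by (auto intro!: sum_nonneg simp: pol_nn mumin)
        moreover have "0 \<le> D x / t" using calculation t by simp
        moreover have "indicator ?S x = (1::real)" using True by simp
        ultimately show ?thesis unfolding q_def using pol_nn[OF x, of "astar x"] by linarith
      next
        case False
        have gap: "t < mu x a - mu x (astar x)" if an: "a \<noteq> astar x" for a
        proof (rule ccontr)
          assume "\<not> t < mu x a - mu x (astar x)"
          then have "x \<in> {x\<in>space P. astar x \<noteq> a \<and> mu x a - mu x (astar x) \<le> t}"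
            using x an by auto
          then have "x \<in> ?S" unfolding Dset by blast
          then show False using False by blast
        qed
        have "t * q x = (\<Sum>a\<in>UNIV - {astar x}. pol x a * t)"
          using pol_sum[OF x] by (simp add: q_def sum_diff1 sum_distrib_left[symmetric] sum_distrib_right[symmetric] algebra_simps)
        also have "\<dots> \<le> (\<Sum>a\<in>UNIV - {astar x}. pol x a * (mu x a - mu x (astar x)))"
          using gap by (intro sum_mono mult_left_mono) (auto simp: pol_nn x less_imp_le)
        also have "\<dots> = D x" unfolding D_def
          by (subst sum.remove[of _ "astar x"]) auto
        finally show ?thesis using False t by (simp add: field_simps)
      qed
    qed (rule q_int)
    also have "\<dots> = measure P ?S + integral\<^sup>L P D / t"
      using Dset_m D_int
      by (subst Bochner_Integration.integral_add) (auto intro!: integrable_real_indicator Bochner_Integration.integrable_divide_zero simp: less_top[symmetric])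
    finally show "(\<integral>x. 1 - pol x (astar x) \<partial>P) \<le> measure P ?S + (risk P mu pol - risk P mu (pi_star astar)) / t"
      by (simp add: Rdef q_def[abs_def])
  qed
  have E1: "joint_exp P pol (\<lambda>x a. pi_star astar x a / pol x a) = 1"
  proof -
    have "joint_exp P pol (\<lambda>x a. pi_star astar x a / pol x a) = (\<integral>x. 1 \<partial>P)"
      unfolding joint_exp_def
    proof (rule Bochner_Integration.integral_cong[OF refl])
      fix x assume x: "x \<in> space P"
      have "pol x (astar x) > 0" using ov x b0 by fastforce
      then show "(\<Sum>a\<in>UNIV. pol x a * (pi_star astar x a / pol x a)) = 1"
        by (subst sum.remove[of _ "astar x"]) (auto simp: pi_star_def intro!: sum.neutral)
    qed
    then show ?thesis by (simp add: prob_space)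
  qed
  show "joint_var P pol (\<lambda>x a. pi_star astar x a / pol x a) \<le> (\<integral>x. 1 - pol x (astar x) \<partial>P) / beta0"
  proof -
    have "joint_var P pol (\<lambda>x a. pi_star astar x a / pol x a) = (\<integral>x. q x / pol x (astar x) \<partial>P)"
      unfolding joint_var_def E1 unfolding joint_exp_def
    proof (rule Bochner_Integration.integral_cong[OF refl])
      fix x assume x: "x \<in> space P"
      have p0: "pol x (astar x) > 0" using ov x b0 by fastforce
      have "(\<Sum>a\<in>UNIV. pol x a * (pi_star astar x a / pol x a - 1)\<^sup>2)
          = pol x (astar x) * (1 / pol x (astar x) - 1)\<^sup>2 + (\<Sum>a\<in>UNIV - {astar x}. pol x a)"
        by (subst sum.remove[of _ "astar x"]) (auto simp: pi_star_def intro!: sum.cong)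
      also have "\<dots> = pol x (astar x) * (1 / pol x (astar x) - 1)\<^sup>2 + q x"
        using pol_sum[OF x] by (simp add: q_def sum_diff1)
      also have "\<dots> = q x / pol x (astar x)"
        using p0 by (simp add: q_def field_simps power2_eq_square)
      finally show "(\<Sum>a\<in>UNIV. pol x a * (pi_star astar x a / pol x a - 1)\<^sup>2) = q x / pol x (astar x)" .
    qed
    also have "\<dots> \<le> (\<integral>x. q x / beta0 \<partial>P)"
    proof (rule Bochner_Integration.integral_mono)
      show "integrable P (\<lambda>x. q x / pol x (astar x))"
      proof (rule integrable_const_bound[where B="1/beta0"])
        show "(\<lambda>x. q x / pol x (astar x)) \<in> borel_measurable P" unfolding q_def using p_m by measurable
        show "AE x in P. norm (q x / pol x (astar x)) \<le> 1/beta0"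
        proof (rule AE_I2)
          fix x assume x: "x \<in> space P"
          have p0: "pol x (astar x) \<ge> beta0" using ov x by fastforce
          have "0 \<le> q x" "q x \<le> 1" using x by (auto simp: q_def pol_nn pol_le1)
          then show "norm (q x / pol x (astar x)) \<le> 1/beta0"
          proof -
            have "q x * beta0 \<le> 1 * beta0" using \<open>q x \<le> 1\<close> b0 by (intro mult_right_mono) auto
            then have h: "q x * beta0 \<le> pol x (astar x)" using p0 by linarith
            show ?thesis using p0 b0 h \<open>0 \<le> q x\<close> by (auto simp: divide_simps)
          qed
        qed
      qed
      show "integrable P (\<lambda>x. q x / beta0)" using q_int by auto
      fix x assume x: "x \<in> space P"
      have p0: "pol x (astar x) \<ge> beta0" using ov x by fastforce
      have "0 \<le> q x" using x by (auto simp: q_def pol_le1)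
      then show "q x / pol x (astar x) \<le> q x / beta0" using p0 b0 by (intro divide_left_mono) auto
    qed
    finally show ?thesis by (simp add: q_def[abs_def])
  qed
qed

lemma opt:
  fixes nu c M R I :: real
  assumes nu: "nu > 0" and c: "c > 0" and M: "M > 0" and R: "R \<ge> 0"
    and H: "\<And>u. u > 0 \<Longrightarrow> I \<le> (c * u) powr nu + R / (M * u)"
  shows "I \<le> (((nu + 1) powr ((nu + 1) / nu) * c) / (nu * M)) powr (nu / (nu + 1)) * R powr (nu / (nu + 1))"
proof (cases "R = 0")
  case True
  have "I \<le> 0"
  proof (rule ccontr)
    assume "\<not> I \<le> 0"
    then have I: "I > 0" by simp
    define u where "u = (I/2) powr (1/nu) / c"
    have u: "u > 0" using I c by (simp add: u_def)
    have "c * u = (I/2) powr (1/nu)" using c by (simp add: u_def)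
    then have "(c * u) powr nu = I/2" using I nu by (simp add: powr_powr)
    then show False using H[OF u] True I by simp
  qed
  then show ?thesis using True by simp
next
  case False
  then have R: "R > 0" using R by simp
  define A where "A = nu * M"
  have A: "A > 0" using nu M by (simp add: A_def)
  define z where "z = c * R / A"
  have z: "z > 0" using c R A by (simp add: z_def)
  define e where "e = nu / (nu + 1)"
  define w where "w = z powr (1 / (nu + 1))"
  have w: "w > 0" using z by (simp add: w_def)
  define u where "u = w / c"
  have u: "u > 0" using w c by (simp add: u_def)
  have cu: "c * u = w" using c by (simp add: u_def)
  have wnu: "w powr nu = z powr e"
    unfolding w_def e_def by (simp add: powr_powr)
  have "w powr nu * w = w powr (nu + 1)" using w by (simp add: powr_add)
  also have "\<dots> = z" unfolding w_def using z nu by (simp add: powr_powr)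
  finally have wz: "w powr nu * w = z" .
  have "R / (M * u) = nu * w powr nu"
  proof -
    have "R / (M * u) = R * c / (M * w)" using c w by (simp add: u_def field_simps)
    also have "\<dots> = nu * z / w" using M nu by (simp add: z_def A_def field_simps)
    also have "\<dots> = nu * w powr nu" using wz w by (simp add: field_simps)
    finally show ?thesis .
  qed
  then have "I \<le> (1 + nu) * z powr e" using H[OF u] cu wnu by (simp add: algebra_simps)
  also have "\<dots> = (((nu + 1) powr ((nu + 1) / nu) * c) / (nu * M)) powr e * R powr e"
  proof -
    have "(((nu + 1) powr ((nu + 1) / nu) * c) / (nu * M)) powr e
        = ((nu + 1) powr ((nu + 1) / nu)) powr e * (c / A) powr e"
      using nu c M by (simp add: A_def powr_mult[symmetric] powr_divide)
    also have "((nu + 1) powr ((nu + 1) / nu)) powr e = nu + 1"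
      using nu by (simp add: powr_powr e_def)
    finally have "(((nu + 1) powr ((nu + 1) / nu) * c) / (nu * M)) powr e * R powr e
        = (nu + 1) * ((c / A) powr e * R powr e)" by simp
    also have "(c / A) powr e * R powr e = z powr e"
      using c A R by (simp add: z_def powr_mult[symmetric])
    finally show ?thesis by simp
  qed
  finally show ?thesis by (simp add: e_def)
qed

theorem mainTheorem6:
  fixes P :: "'x measure" and mu :: "'x \<Rightarrow> 'a::finite \<Rightarrow> real"
    and astar :: "'x \<Rightarrow> 'a" and M beta0 :: real
  assumes "prob_space P"
    and "\<And>a. integrable P (\<lambda>x. mu x a)"
    and "\<And>a. {x\<in>space P. astar x = a} \<in> sets P"
    and "\<And>x a. x \<in> space P \<Longrightarrow> mu x (astar x) \<le> mu x a"
    and "M > 0" and "beta0 > 0"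
  shows
    "(\<forall>(nu::real) (c::real). nu > 0 \<longrightarrow> c > 0 \<longrightarrow>
        (\<forall>u\<ge>0. measure P {x\<in>space P. Delta_min mu astar x \<le> ereal (M * u)} \<le> (c * u) powr nu) \<longrightarrow>
        (\<forall>pol. is_policy P pol \<longrightarrow> (\<forall>x\<in>space P. pol x (astar x) \<ge> beta0) \<longrightarrow>
           joint_var P pol (\<lambda>x a. pi_star astar x a / pol x a)
             \<le> ((((nu + 1) powr ((nu + 1) / nu) * c) / (nu * M)) powr (nu / (nu + 1)) / beta0)
                * (risk P mu pol - risk P mu (pi_star astar)) powr (nu / (nu + 1))))
     \<and>
     (\<forall>u0::real. u0 > 0 \<longrightarrow>
        measure P {x\<in>space P. Delta_min mu astar x \<le> ereal (M * u0)} = 0 \<longrightarrow>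
        (\<forall>pol. is_policy P pol \<longrightarrow> (\<forall>x\<in>space P. pol x (astar x) \<ge> beta0) \<longrightarrow>
           joint_var P pol (\<lambda>x a. pi_star astar x a / pol x a)
             \<le> (1 / (beta0 * M * u0)) * (risk P mu pol - risk P mu (pi_star astar))))"
  proof (intro conjI allI impI)
  fix nu c :: real and pol
  assume nu: "nu > 0" and c: "c > 0"
    and H: "\<forall>u\<ge>0. measure P {x\<in>space P. Delta_min mu astar x \<le> ereal (M * u)} \<le> (c * u) powr nu"
    and pol: "is_policy P pol" and ov: "\<forall>x\<in>space P. pol x (astar x) \<ge> beta0"
  note k = key[OF assms(1,2,3,4) assms(6) pol ov]
  let ?I = "\<integral>x. 1 - pol x (astar x) \<partial>P"
  let ?R = "risk P mu pol - risk P mu (pi_star astar)"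
  have "?I \<le> (((nu + 1) powr ((nu + 1) / nu) * c) / (nu * M)) powr (nu / (nu + 1)) * ?R powr (nu / (nu + 1))"
  proof (rule opt[OF nu c assms(5) k(3)])
    fix u :: real assume u: "u > 0"
    have "?I \<le> measure P {x\<in>space P. Delta_min mu astar x \<le> ereal (M * u)} + ?R / (M * u)"
      using k(2) u assms(5) by simp
    also have "\<dots> \<le> (c * u) powr nu + ?R / (M * u)" using H u by simp
    finally show "?I \<le> (c * u) powr nu + ?R / (M * u)" .
  qed
  then have "?I / beta0 \<le> ((((nu + 1) powr ((nu + 1) / nu) * c) / (nu * M)) powr (nu / (nu + 1)) * ?R powr (nu / (nu + 1))) / beta0"
    using assms(6) by (intro divide_right_mono) auto
  then show "joint_var P pol (\<lambda>x a. pi_star astar x a / pol x a)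
             \<le> ((((nu + 1) powr ((nu + 1) / nu) * c) / (nu * M)) powr (nu / (nu + 1)) / beta0)
                * ?R powr (nu / (nu + 1))"
    using k(1) by (simp add: field_simps)
next
  fix u0 :: real and pol
  assume u0: "u0 > 0"
    and H: "measure P {x\<in>space P. Delta_min mu astar x \<le> ereal (M * u0)} = 0"
    and pol: "is_policy P pol" and ov: "\<forall>x\<in>space P. pol x (astar x) \<ge> beta0"
  note k = key[OF assms(1,2,3,4) assms(6) pol ov]
  let ?I = "\<integral>x. 1 - pol x (astar x) \<partial>P"
  let ?R = "risk P mu pol - risk P mu (pi_star astar)"
  have "?I \<le> ?R / (M * u0)"
    using k(2) u0 assms(5) H by (metis add_0 mult_pos_pos)
  then have "?I / beta0 \<le> ?R / (M * u0) / beta0"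
    using assms(6) by (intro divide_right_mono) auto
  then show "joint_var P pol (\<lambda>x a. pi_star astar x a / pol x a)
             \<le> (1 / (beta0 * M * u0)) * ?R"
    using k(1) by (simp add: field_simps)
qed

end
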